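(* Let $P$ and $Q$ be two plane posets with $P\leq Q$. Then any path in the (oriented) Hasse graph of the poset $(\mathcal{PP},\leq)$ from $P$ to $Q$ has length $\ell(Q)-\ell(P)$, where $\ell(R)=\sharp\{(x,y)\in R^2\mid x<_r y\}$ is the level of a plane poset $R$.
   Context: A plane poset is a finite set with two partial orders $\leq_h,\leq_r$ such that two distinct elements are $\leq_h$-comparable iff they are not $\leq_r$-comparable; $\mathcal{PP}$ is the set of isomorphism classes of plane posets. On a plane poset, $x\leq y$ iff ($x\leq_h y$ or $x\leq_r y$) is a total order (known fact). For $P,Q$ of equal cardinality, $\theta_{P,Q}$ is the increasing bijection $P\to Q$ and $P\leq Q$ means: for all $x,y\in P$, $\theta_{P,Q}(x)\leq_h\theta_{P,Q}(y)$ in $Q$ implies $x\leq_h y$ in $P$; this is a partial order on each set of plane posets of fixed cardinality (posets of different cardinalities are incomparable). *)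

theory Defs
  imports Main
begin

text \<open>A (finite) plane poset is represented as a triple (A, h, r): a finite carrier
  A of natural numbers with two relations h (the order \<le>_h) and r (the order \<le>_r),
  considered only on A. Every finite plane poset is isomorphic to one of this form.\<close>

type_synonym pp = "nat set \<times> (nat \<Rightarrow> nat \<Rightarrow> bool) \<times> (nat \<Rightarrow> nat \<Rightarrow> bool)"

definition pp_carrier :: "pp \<Rightarrow> nat set" where "pp_carrier P = fst P"
definition pp_h :: "pp \<Rightarrow> nat \<Rightarrow> nat \<Rightarrow> bool" where "pp_h P = fst (snd P)"
definition pp_r :: "pp \<Rightarrow> nat \<Rightarrow> nat \<Rightarrow> bool" where "pp_r P = snd (snd P)"

definition partial_order_rel :: "nat set \<Rightarrow> (nat \<Rightarrow> nat \<Rightarrow> bool) \<Rightarrow> bool" where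
  "partial_order_rel A R \<longleftrightarrow>
     (\<forall>x\<in>A. R x x) \<and>
     (\<forall>x\<in>A. \<forall>y\<in>A. R x y \<and> R y x \<longrightarrow> x = y) \<and>
     (\<forall>x\<in>A. \<forall>y\<in>A. \<forall>z\<in>A. R x y \<and> R y z \<longrightarrow> R x z)"

definition comparable :: "(nat \<Rightarrow> nat \<Rightarrow> bool) \<Rightarrow> nat \<Rightarrow> nat \<Rightarrow> bool" where
  "comparable R x y \<longleftrightarrow> R x y \<or> R y x"

definition plane_poset :: "pp \<Rightarrow> bool" where
  "plane_poset P \<longleftrightarrow> finite (pp_carrier P) \<and>
     partial_order_rel (pp_carrier P) (pp_h P) \<and>
     partial_order_rel (pp_carrier P) (pp_r P) \<and>
     (\<forall>x\<in>pp_carrier P. \<forall>y\<in>pp_carrier P. x \<noteq> y \<longrightarrow>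
        (comparable (pp_h P) x y \<longleftrightarrow> \<not> comparable (pp_r P) x y))"

definition pp_tle :: "pp \<Rightarrow> nat \<Rightarrow> nat \<Rightarrow> bool" where
  "pp_tle P x y \<longleftrightarrow> pp_h P x y \<or> pp_r P x y"

definition pp_iso :: "pp \<Rightarrow> pp \<Rightarrow> bool" where
  "pp_iso P Q \<longleftrightarrow> (\<exists>f. bij_betw f (pp_carrier P) (pp_carrier Q) \<and>
     (\<forall>x\<in>pp_carrier P. \<forall>y\<in>pp_carrier P.
        (pp_h P x y \<longleftrightarrow> pp_h Q (f x) (f y)) \<and> (pp_r P x y \<longleftrightarrow> pp_r Q (f x) (f y))))"

definition pp_theta :: "pp \<Rightarrow> pp \<Rightarrow> nat \<Rightarrow> nat" where
  "pp_theta P Q = (THE f. bij_betw f (pp_carrier P) (pp_carrier Q) \<and>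
     (\<forall>x\<in>pp_carrier P. \<forall>y\<in>pp_carrier P. pp_tle P x y \<longrightarrow> pp_tle Q (f x) (f y)) \<and>
     (\<forall>x. x \<notin> pp_carrier P \<longrightarrow> f x = undefined))"

definition pp_le :: "pp \<Rightarrow> pp \<Rightarrow> bool" where
  "pp_le P Q \<longleftrightarrow> card (pp_carrier P) = card (pp_carrier Q) \<and>
     (\<forall>x\<in>pp_carrier P. \<forall>y\<in>pp_carrier P.
        pp_h Q (pp_theta P Q x) (pp_theta P Q y) \<longrightarrow> pp_h P x y)"

definition pp_less :: "pp \<Rightarrow> pp \<Rightarrow> bool" where
  "pp_less P Q \<longleftrightarrow> pp_le P Q \<and> \<not> pp_iso P Q"

definition pp_hasse_edge :: "pp \<Rightarrow> pp \<Rightarrow> bool" where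
  "pp_hasse_edge P Q \<longleftrightarrow> pp_less P Q \<and>
     \<not> (\<exists>R. plane_poset R \<and> pp_less P R \<and> pp_less R Q)"

text \<open>A path in the Hasse graph from (the class of) P to (the class of) Q, given by
  representatives of its vertices; its length is the number of edges.\<close>
definition pp_hasse_path :: "pp list \<Rightarrow> pp \<Rightarrow> pp \<Rightarrow> bool" where
  "pp_hasse_path ps P Q \<longleftrightarrow> ps \<noteq> [] \<and> (\<forall>R\<in>set ps. plane_poset R) \<and>
     pp_iso (hd ps) P \<and> pp_iso (last ps) Q \<and>
     (\<forall>i. Suc i < length ps \<longrightarrow> pp_hasse_edge (ps ! i) (ps ! Suc i))"

definition pp_level :: "pp \<Rightarrow> nat" where
  "pp_level P = card {(x, y). x \<in> pp_carrier P \<and> y \<in> pp_carrier P \<and> pp_r P x y \<and> x \<noteq> y}"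

end

theory Submission imports Defs begin

definition lin :: "nat set \<Rightarrow> (nat\<Rightarrow>nat\<Rightarrow>bool) \<Rightarrow> bool" where
 "lin A le \<longleftrightarrow> (\<forall>x\<in>A. le x x) \<and> (\<forall>x\<in>A. \<forall>y\<in>A. le x y \<and> le y x \<longrightarrow> x=y) \<and>
   (\<forall>x\<in>A. \<forall>y\<in>A. \<forall>z\<in>A. le x y \<and> le y z \<longrightarrow> le x z) \<and> (\<forall>x\<in>A. \<forall>y\<in>A. le x y \<or> le y x)"

lemma lin_refl: "lin A le \<Longrightarrow> x\<in>A \<Longrightarrow> le x x" unfolding lin_def by blast
lemma lin_antisym: "lin A le \<Longrightarrow> x\<in>A \<Longrightarrow> y\<in>A \<Longrightarrow> le x y \<Longrightarrow> le y x \<Longrightarrow> x = y" unfolding lin_def by blast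
lemma lin_trans: "lin A le \<Longrightarrow> x\<in>A \<Longrightarrow> y\<in>A \<Longrightarrow> z\<in>A \<Longrightarrow> le x y \<Longrightarrow> le y z \<Longrightarrow> le x z" unfolding lin_def by blast
lemma lin_total: "lin A le \<Longrightarrow> x\<in>A \<Longrightarrow> y\<in>A \<Longrightarrow> le x y \<or> le y x" unfolding lin_def by blast

definition rk :: "nat set \<Rightarrow> (nat\<Rightarrow>nat\<Rightarrow>bool) \<Rightarrow> nat \<Rightarrow> nat" where
 "rk A le u = card {v\<in>A. le v u \<and> v \<noteq> u}"

lemma rk_less:
  assumes "finite A" "lin A le" "u\<in>A" "w\<in>A" "le u w" "u\<noteq>w"
  shows "rk A le u < rk A le w"
  unfolding rk_def
proof (rule psubset_card_mono)
  show "finite {v \<in> A. le v w \<and> v \<noteq> w}" using assms by auto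
  have "{v \<in> A. le v u \<and> v \<noteq> u} \<subseteq> {v \<in> A. le v w \<and> v \<noteq> w}"
  proof
    fix v assume v: "v \<in> {v \<in> A. le v u \<and> v \<noteq> u}"
    hence a: "v\<in>A" "le v u" "v \<noteq> u" by auto
    have "le v w" using lin_trans[OF assms(2) a(1) assms(3,4) a(2) assms(5)] .
    moreover have "v \<noteq> w"
    proof
      assume "v = w" thus False using lin_antisym[OF assms(2,3,4) assms(5)] a by simp
    qed
    ultimately show "v \<in> {v \<in> A. le v w \<and> v \<noteq> w}" using a by simp
  qed
  moreover have "u \<in> {v \<in> A. le v w \<and> v \<noteq> w}" "u \<notin> {v \<in> A. le v u \<and> v \<noteq> u}" using assms by auto
  ultimately show "{v \<in> A. le v u \<and> v \<noteq> u} \<subset> {v \<in> A. le v w \<and> v \<noteq> w}" by blast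
qed

lemma rk_le_iff:
  assumes "finite A" "lin A le" "u\<in>A" "w\<in>A"
  shows "le u w \<longleftrightarrow> rk A le u \<le> rk A le w"
proof
  assume a: "le u w"
  show "rk A le u \<le> rk A le w"
  proof (cases "u = w")
    case True thus ?thesis by simp
  next
    case False thus ?thesis using rk_less[OF assms a] by simp
  qed
next
  assume a: "rk A le u \<le> rk A le w"
  show "le u w"
  proof (rule ccontr)
    assume n: "\<not> le u w"
    have "le u w \<or> le w u" using lin_total[OF assms(2,3,4)] .
    hence "le w u" using n by blast
    moreover have "w \<noteq> u" using n lin_refl[OF assms(2,3)] by blast
    ultimately show False using rk_less[OF assms(1,2,4,3)] a by simp
  qed
qed

lemma rk_inj: assumes "finite A" "lin A le" shows "inj_on (rk A le) A"
proof (rule inj_onI)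
  fix u w assume "u\<in>A" "w\<in>A" "rk A le u = rk A le w"
  hence "le u w" "le w u" using rk_le_iff[OF assms] by auto
  thus "u = w" using lin_antisym[OF assms(2) \<open>u\<in>A\<close> \<open>w\<in>A\<close>] by blast
qed

lemma rk_lt: assumes "finite A" "u\<in>A" shows "rk A le u < card A"
proof -
  have "{v\<in>A. le v u \<and> v \<noteq> u} \<subset> A" using assms by auto
  thus ?thesis unfolding rk_def using assms psubset_card_mono by blast
qed

lemma rk_bij: assumes "finite A" "lin A le" shows "bij_betw (rk A le) A {..<card A}"
proof -
  have i: "inj_on (rk A le) A" by (rule rk_inj[OF assms])
  have s: "rk A le ` A \<subseteq> {..<card A}" using rk_lt[OF assms(1)] by auto
  have "card (rk A le ` A) = card {..<card A}" using card_image[OF i] by simp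
  hence "rk A le ` A = {..<card A}" using s by (simp add: card_subset_eq)
  thus ?thesis using i by (simp add: bij_betw_def)
qed

lemma mono_bij_rk:
  assumes "finite A" "finite B" "lin A le1" "lin B le2" "bij_betw f A B"
    "\<forall>x\<in>A. \<forall>y\<in>A. le1 x y \<longrightarrow> le2 (f x) (f y)" "u\<in>A"
  shows "rk B le2 (f u) = rk A le1 u"
proof -
  have inj: "inj_on f A" using assms(5) by (simp add: bij_betw_def)
  have img: "f ` A = B" using assms(5) by (simp add: bij_betw_def)
  have "{w\<in>B. le2 w (f u) \<and> w \<noteq> f u} = f ` {v\<in>A. le1 v u \<and> v\<noteq>u}"
  proof
    show "f ` {v\<in>A. le1 v u \<and> v\<noteq>u} \<subseteq> {w\<in>B. le2 w (f u) \<and> w \<noteq> f u}"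
    proof
      fix w assume "w \<in> f ` {v\<in>A. le1 v u \<and> v\<noteq>u}"
      then obtain v where v: "v\<in>A" "le1 v u" "v\<noteq>u" "w = f v" by blast
      have "f v \<in> B" using img v by blast
      moreover have "le2 (f v) (f u)" using assms(6,7) v by blast
      moreover have "f v \<noteq> f u" using inj v assms(7) by (meson inj_onD)
      ultimately show "w \<in> {w\<in>B. le2 w (f u) \<and> w \<noteq> f u}" using v by simp
    qed
  next
    show "{w\<in>B. le2 w (f u) \<and> w \<noteq> f u} \<subseteq> f ` {v\<in>A. le1 v u \<and> v\<noteq>u}"
    proof
      fix w assume w: "w \<in> {w\<in>B. le2 w (f u) \<and> w \<noteq> f u}"
      then obtain v where v: "v\<in>A" "w = f v" using img by auto
      have "v \<noteq> u" using w v by auto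
      moreover have "le1 v u"
      proof (rule ccontr)
        assume "\<not> le1 v u"
        hence "le1 u v" using lin_total[OF assms(3) assms(7) v(1)] by blast
        hence "le2 (f u) (f v)" using assms(6,7) v by auto
        moreover have "f u \<in> B" using img assms(7) by auto
        moreover have "f v \<in> B" using img v by blast
        moreover have "le2 (f v) (f u)" using w v by blast
        ultimately have "f u = f v" using lin_antisym[OF assms(4)] by blast
        thus False using w v by auto
      qed
      ultimately show "w \<in> f ` {v\<in>A. le1 v u \<and> v\<noteq>u}" using v by auto
    qed
  qed
  moreover have "inj_on f {v\<in>A. le1 v u \<and> v\<noteq>u}" using inj by (rule inj_on_subset) auto
  ultimately show ?thesis unfolding rk_def by (simp add: card_image)
qed

definition thprop :: "nat set \<Rightarrow> (nat\<Rightarrow>nat\<Rightarrow>bool) \<Rightarrow> nat set \<Rightarrow> (nat\<Rightarrow>nat\<Rightarrow>bool) \<Rightarrow> (nat \<Rightarrow> nat) \<Rightarrow> bool" where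
  "thprop A le1 B le2 f \<longleftrightarrow> bij_betw f A B \<and>
     (\<forall>x\<in>A. \<forall>y\<in>A. le1 x y \<longrightarrow> le2 (f x) (f y)) \<and> (\<forall>x. x \<notin> A \<longrightarrow> f x = undefined)"

lemma thprop_unique:
  assumes "finite A" "finite B" "lin A le1" "lin B le2" "thprop A le1 B le2 f" "thprop A le1 B le2 g"
  shows "f = g"
proof
  fix u show "f u = g u"
  proof (cases "u \<in> A")
    case True
    have "rk B le2 (f u) = rk B le2 (g u)"
      using mono_bij_rk[OF assms(1-4) _ _ True, of f] mono_bij_rk[OF assms(1-4) _ _ True, of g] assms(5,6)
      unfolding thprop_def by auto
    moreover have "f u \<in> B" "g u \<in> B" using assms(5,6) True unfolding thprop_def bij_betw_def by auto
    ultimately show ?thesis using rk_inj[OF assms(2,4)] by (auto dest: inj_onD)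
  next
    case False thus ?thesis using assms(5,6) unfolding thprop_def by auto
  qed
qed

lemma thprop_ex:
  assumes "finite A" "finite B" "lin A le1" "lin B le2" "card A = card B"
  shows "\<exists>f. thprop A le1 B le2 f"
proof -
  let ?g = "inv_into B (rk B le2)"
  define f where "f u = (if u \<in> A then ?g (rk A le1 u) else undefined)" for u
  have b1: "bij_betw (rk A le1) A {..<card B}" using rk_bij[OF assms(1,3)] assms(5) by simp
  have b2: "bij_betw (rk B le2) B {..<card B}" using rk_bij[OF assms(2,4)] .
  have b3: "bij_betw ?g {..<card B} B" using bij_betw_inv_into[OF b2] .
  have "bij_betw (?g \<circ> rk A le1) A B" using bij_betw_trans[OF b1 b3] .
  hence bij: "bij_betw f A B" by (rule bij_betw_cong[THEN iffD1, rotated]) (simp add: f_def)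
  have rkf: "rk B le2 (f u) = rk A le1 u" if "u\<in>A" for u
  proof -
    have "rk A le1 u \<in> rk B le2 ` B" using b1 b2 that unfolding bij_betw_def by auto
    thus ?thesis using that by (simp add: f_def f_inv_into_f)
  qed
  have mono: "\<forall>x\<in>A. \<forall>y\<in>A. le1 x y \<longrightarrow> le2 (f x) (f y)"
  proof (intro ballI impI)
    fix x y assume xy: "x\<in>A" "y\<in>A" "le1 x y"
    have "f x \<in> B" "f y \<in> B" using bij xy unfolding bij_betw_def by auto
    thus "le2 (f x) (f y)" using rk_le_iff[OF assms(2,4)] rk_le_iff[OF assms(1,3)] xy rkf by auto
  qed
  show ?thesis using bij mono unfolding thprop_def by (intro exI[of _ f]) (auto simp: f_def)
qed


lemma ppD:
  assumes "plane_poset P"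
  shows "finite (pp_carrier P)"
    and "\<And>x. x \<in> pp_carrier P \<Longrightarrow> pp_h P x x"
    and "\<And>x y. x \<in> pp_carrier P \<Longrightarrow> y \<in> pp_carrier P \<Longrightarrow> pp_h P x y \<Longrightarrow> pp_h P y x \<Longrightarrow> x = y"
    and "\<And>x y z. x \<in> pp_carrier P \<Longrightarrow> y \<in> pp_carrier P \<Longrightarrow> z \<in> pp_carrier P \<Longrightarrow> pp_h P x y \<Longrightarrow> pp_h P y z \<Longrightarrow> pp_h P x z"
    and "\<And>x. x \<in> pp_carrier P \<Longrightarrow> pp_r P x x"
    and "\<And>x y. x \<in> pp_carrier P \<Longrightarrow> y \<in> pp_carrier P \<Longrightarrow> pp_r P x y \<Longrightarrow> pp_r P y x \<Longrightarrow> x = y"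
    and "\<And>x y z. x \<in> pp_carrier P \<Longrightarrow> y \<in> pp_carrier P \<Longrightarrow> z \<in> pp_carrier P \<Longrightarrow> pp_r P x y \<Longrightarrow> pp_r P y z \<Longrightarrow> pp_r P x z"
    and "\<And>x y. x \<in> pp_carrier P \<Longrightarrow> y \<in> pp_carrier P \<Longrightarrow> x \<noteq> y \<Longrightarrow> (pp_h P x y \<or> pp_h P y x) \<longleftrightarrow> \<not> (pp_r P x y \<or> pp_r P y x)"
  using assms unfolding plane_poset_def partial_order_rel_def comparable_def by blast+

lemma pp_lin: assumes "plane_poset P" shows "lin (pp_carrier P) (pp_tle P)"
proof -
  note D = ppD[OF assms]
  let ?A = "pp_carrier P" and ?h = "pp_h P" and ?r = "pp_r P"
  have anti: "x = y" if "x\<in>?A" "y\<in>?A" "pp_tle P x y" "pp_tle P y x" for x y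
    using that D(3,6,8) unfolding pp_tle_def by blast
  have trans: "pp_tle P x z" if "x\<in>?A" "y\<in>?A" "z\<in>?A" "pp_tle P x y" "pp_tle P y z" for x y z
  proof (cases "x = y \<or> y = z \<or> x = z")
    case True thus ?thesis using that anti by auto
  next
    case False
    hence ne: "x\<noteq>y" "y\<noteq>z" "x\<noteq>z" by auto
    have cxz: "(?h x z \<or> ?h z x) \<or> (?r x z \<or> ?r z x)" using D(8)[OF that(1,3) ne(3)] by blast
    show ?thesis
    proof (cases "?h x y")
      case hxy: True
      show ?thesis
      proof (cases "?h y z")
        case True thus ?thesis using hxy D(4) that unfolding pp_tle_def by blast
      next
        case False
        hence ryz: "?r y z" using that(5) unfolding pp_tle_def by auto
        show ?thesis using cxz
        proof (elim disjE)
          assume "?h z x" hence "?h z y" using D(4) hxy that by blast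
          thus ?thesis using ryz D(8)[OF that(2,3) ne(2)] by blast
        next
          assume "?r z x" hence "?r y x" using D(7) ryz that by blast
          thus ?thesis using hxy D(8)[OF that(1,2) ne(1)] by blast
        qed (auto simp: pp_tle_def)
      qed
    next
      case False
      hence rxy: "?r x y" using that(4) unfolding pp_tle_def by auto
      show ?thesis
      proof (cases "?r y z")
        case True thus ?thesis using rxy D(7) that unfolding pp_tle_def by blast
      next
        case False
        hence hyz: "?h y z" using that(5) unfolding pp_tle_def by auto
        show ?thesis using cxz
        proof (elim disjE)
          assume "?h z x" hence "?h y x" using D(4) hyz that by blast
          thus ?thesis using rxy D(8)[OF that(1,2) ne(1)] by blast
        next
          assume "?r z x" hence "?r z y" using D(7) rxy that by blast
          thus ?thesis using hyz D(8)[OF that(2,3) ne(2)] by blast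
        qed (auto simp: pp_tle_def)
      qed
    qed
  qed
  have tot: "pp_tle P x y \<or> pp_tle P y x" if "x\<in>?A" "y\<in>?A" for x y
    using that D(2) D(8)[OF that] unfolding pp_tle_def by blast
  show ?thesis unfolding lin_def using anti trans tot D(2) unfolding pp_tle_def by blast
qed

lemma pp_dual: assumes "plane_poset P"
  shows "plane_poset (pp_carrier P, pp_h P, \<lambda>u v. pp_r P v u)"
proof -
  have e: "pp_carrier (pp_carrier P, pp_h P, \<lambda>u v. pp_r P v u) = pp_carrier P"
    "pp_h (pp_carrier P, pp_h P, \<lambda>u v. pp_r P v u) = pp_h P"
    "pp_r (pp_carrier P, pp_h P, \<lambda>u v. pp_r P v u) = (\<lambda>u v. pp_r P v u)"
    by (simp_all add: pp_carrier_def pp_h_def pp_r_def)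
  have po: "partial_order_rel (pp_carrier P) (pp_r P)" and poh: "partial_order_rel (pp_carrier P) (pp_h P)"
    and f: "finite (pp_carrier P)"
    and c: "\<forall>x\<in>pp_carrier P. \<forall>y\<in>pp_carrier P. x \<noteq> y \<longrightarrow>
        (comparable (pp_h P) x y \<longleftrightarrow> \<not> comparable (pp_r P) x y)"
    using assms unfolding plane_poset_def by auto
  have po': "partial_order_rel (pp_carrier P) (\<lambda>u v. pp_r P v u)"
    using po unfolding partial_order_rel_def by blast
  have cc: "comparable (\<lambda>u v. pp_r P v u) = comparable (pp_r P)"
    by (auto simp: comparable_def fun_eq_iff)
  show ?thesis unfolding plane_poset_def e cc using po' poh f c by blast
qed

lemma lin_dual: assumes "plane_poset P"
  shows "lin (pp_carrier P) (\<lambda>u v. pp_h P u v \<or> pp_r P v u)"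
proof -
  have e: "pp_tle (pp_carrier P, pp_h P, \<lambda>u v. pp_r P v u) = (\<lambda>u v. pp_h P u v \<or> pp_r P v u)"
    by (simp add: pp_tle_def pp_h_def pp_r_def fun_eq_iff)
  have c: "pp_carrier (pp_carrier P, pp_h P, \<lambda>u v. pp_r P v u) = pp_carrier P" by (simp add: pp_carrier_def)
  show ?thesis using pp_lin[OF pp_dual[OF assms]] unfolding e c .
qed

lemma theta_prop:
  assumes "plane_poset P" "plane_poset Q" "card (pp_carrier P) = card (pp_carrier Q)"
  shows "thprop (pp_carrier P) (pp_tle P) (pp_carrier Q) (pp_tle Q) (pp_theta P Q)"
proof -
  have fP: "finite (pp_carrier P)" and fQ: "finite (pp_carrier Q)" using ppD(1) assms(1,2) by blast+
  note L = pp_lin[OF assms(1)] pp_lin[OF assms(2)]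
  obtain f where f: "thprop (pp_carrier P) (pp_tle P) (pp_carrier Q) (pp_tle Q) f"
    using thprop_ex[OF fP fQ L assms(3)] by blast
  have t: "pp_theta P Q = (THE f. thprop (pp_carrier P) (pp_tle P) (pp_carrier Q) (pp_tle Q) f)"
    unfolding pp_theta_def thprop_def ..
  have "pp_theta P Q = f" unfolding t
    by (rule the_equality[where P="thprop (pp_carrier P) (pp_tle P) (pp_carrier Q) (pp_tle Q)", OF f])
       (rule thprop_unique[OF fP fQ L _ f])
  thus ?thesis using f by simp
qed

lemma theta_eq:
  assumes "plane_poset P" "plane_poset Q"
    "thprop (pp_carrier P) (pp_tle P) (pp_carrier Q) (pp_tle Q) f"
  shows "pp_theta P Q = f"
proof -
  have fP: "finite (pp_carrier P)" and fQ: "finite (pp_carrier Q)" using ppD(1) assms(1,2) by blast+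
  note L = pp_lin[OF assms(1)] pp_lin[OF assms(2)]
  have t: "pp_theta P Q = (THE f. thprop (pp_carrier P) (pp_tle P) (pp_carrier Q) (pp_tle Q) f)"
    unfolding pp_theta_def thprop_def ..
  show ?thesis unfolding t
    by (rule the_equality[where P="thprop (pp_carrier P) (pp_tle P) (pp_carrier Q) (pp_tle Q)", OF assms(3)])
       (rule thprop_unique[OF fP fQ L _ assms(3)])
qed


definition LS :: "pp \<Rightarrow> (nat \<times> nat) set" where
  "LS P = {(x, y). x \<in> pp_carrier P \<and> y \<in> pp_carrier P \<and> pp_r P x y \<and> x \<noteq> y}"

lemma level_LS: "pp_level P = card (LS P)" by (simp add: pp_level_def LS_def)

lemma LS_finite: "plane_poset P \<Longrightarrow> finite (LS P)"
proof -
  assume "plane_poset P"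
  hence "finite (pp_carrier P \<times> pp_carrier P)" using ppD(1) by auto
  moreover have "LS P \<subseteq> pp_carrier P \<times> pp_carrier P" by (auto simp: LS_def)
  ultimately show ?thesis by (rule finite_subset[rotated])
qed

lemma level_iso: assumes "pp_iso P Q" shows "pp_level P = pp_level Q"
proof -
  obtain f where f: "bij_betw f (pp_carrier P) (pp_carrier Q)"
    "\<forall>x\<in>pp_carrier P. \<forall>y\<in>pp_carrier P. (pp_h P x y \<longleftrightarrow> pp_h Q (f x) (f y)) \<and> (pp_r P x y \<longleftrightarrow> pp_r Q (f x) (f y))"
    using assms unfolding pp_iso_def by blast
  have inj: "inj_on f (pp_carrier P)" and img: "f ` pp_carrier P = pp_carrier Q" using f(1) by (auto simp: bij_betw_def)
  have "map_prod f f ` LS P = LS Q"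
  proof
    show "map_prod f f ` LS P \<subseteq> LS Q" using f(2) img inj by (auto simp: LS_def dest: inj_onD)
  next
    show "LS Q \<subseteq> map_prod f f ` LS P"
    proof
      fix p assume "p \<in> LS Q"
      then obtain a b where p: "p = (a,b)" "a \<in> pp_carrier Q" "b \<in> pp_carrier Q" "pp_r Q a b" "a \<noteq> b" by (auto simp: LS_def)
      then obtain u v where uv: "u \<in> pp_carrier P" "v \<in> pp_carrier P" "a = f u" "b = f v" using img by blast
      hence "(u,v) \<in> LS P" using p f(2) by (auto simp: LS_def)
      thus "p \<in> map_prod f f ` LS P" using uv p by force
    qed
  qed
  moreover have "inj_on (map_prod f f) (LS P)"
    using inj by (auto simp: LS_def inj_on_def)
  ultimately show ?thesis unfolding level_LS by (metis card_image)
qed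

locale le_setup =
  fixes P Q
  assumes pP: "plane_poset P" and pQ: "plane_poset Q" and le: "pp_le P Q"
begin

abbreviation "A \<equiv> pp_carrier P"
abbreviation "B \<equiv> pp_carrier Q"
abbreviation "h \<equiv> pp_h P"
abbreviation "r \<equiv> pp_r P"
abbreviation "h2 \<equiv> pp_h Q"
abbreviation "r2 \<equiv> pp_r Q"
abbreviation "th \<equiv> pp_theta P Q"

lemmas DP = ppD[OF pP]
lemmas DQ = ppD[OF pQ]

lemma cardeq: "card A = card B" using le by (simp add: pp_le_def)
lemma hrefl: "x \<in> A \<Longrightarrow> y \<in> A \<Longrightarrow> h2 (th x) (th y) \<Longrightarrow> h x y" using le by (simp add: pp_le_def)

lemma thp: "thprop A (pp_tle P) B (pp_tle Q) th" using theta_prop[OF pP pQ cardeq] .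
lemma th_bij: "bij_betw th A B" using thp by (simp add: thprop_def)
lemma th_in: "x \<in> A \<Longrightarrow> th x \<in> B" using th_bij by (auto simp: bij_betw_def)
lemma th_inj: "x \<in> A \<Longrightarrow> y \<in> A \<Longrightarrow> th x = th y \<Longrightarrow> x = y" using th_bij by (auto simp: bij_betw_def dest: inj_onD)
lemma th_img: "th ` A = B" using th_bij by (auto simp: bij_betw_def)
lemma th_mono: "x \<in> A \<Longrightarrow> y \<in> A \<Longrightarrow> pp_tle P x y \<Longrightarrow> pp_tle Q (th x) (th y)" using thp by (simp add: thprop_def)

lemma r_pres: assumes "x \<in> A" "y \<in> A" "x \<noteq> y" "r x y" shows "r2 (th x) (th y)"
proof -
  have "pp_tle Q (th x) (th y)" using th_mono assms by (simp add: pp_tle_def)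
  moreover have "\<not> h2 (th x) (th y)"
  proof
    assume "h2 (th x) (th y)" hence "h x y" using hrefl assms by auto
    thus False using DP(8)[OF assms(1-3)] assms(4) by blast
  qed
  ultimately show ?thesis by (simp add: pp_tle_def)
qed

lemma LS_map: "map_prod th th ` LS P \<subseteq> LS Q"
  using r_pres th_in th_inj by (auto simp: LS_def)
lemma LS_inj: "inj_on (map_prod th th) (LS P)"
  using th_inj by (auto simp: LS_def inj_on_def)

lemma level_mono: "pp_level P \<le> pp_level Q"
  unfolding level_LS using card_inj_on_le[OF LS_inj LS_map LS_finite[OF pQ]] .

lemma level_eq_iso: assumes "pp_level P = pp_level Q" shows "pp_iso P Q"
proof -
  have eq: "map_prod th th ` LS P = LS Q"
    using card_subset_eq[OF LS_finite[OF pQ] LS_map] assms card_image[OF LS_inj] unfolding level_LS by simp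
  have rr: "r x y" if "x \<in> A" "y \<in> A" "x \<noteq> y" "r2 (th x) (th y)" for x y
  proof -
    have "(th x, th y) \<in> LS Q" using that th_in th_inj by (auto simp: LS_def)
    then obtain u v where "(u,v) \<in> LS P" "th u = th x" "th v = th y" using eq by force
    thus ?thesis using th_inj that by (auto simp: LS_def)
  qed
  have "(h x y \<longleftrightarrow> h2 (th x) (th y)) \<and> (r x y \<longleftrightarrow> r2 (th x) (th y))" if "x \<in> A" "y \<in> A" for x y
  proof (cases "x = y")
    case True thus ?thesis using that DP(2) DP(5) DQ(2) DQ(5) th_in by simp
  next
    case False
    have ne: "th x \<noteq> th y" using False th_inj that by auto
    have r1: "r x y \<longleftrightarrow> r2 (th x) (th y)" using rr r_pres that False by auto
    have "h2 (th x) (th y)" if hx: "h x y"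
    proof -
      have "\<not> r x y" "\<not> r y x" using DP(8)[OF \<open>x\<in>A\<close> \<open>y\<in>A\<close> False] hx by auto
      hence "\<not> r2 (th x) (th y)" "\<not> r2 (th y) (th x)" using rr \<open>x\<in>A\<close> \<open>y\<in>A\<close> False by auto
      moreover have "\<not> h2 (th y) (th x)" using hrefl hx DP(3) \<open>x\<in>A\<close> \<open>y\<in>A\<close> False by blast
      ultimately show ?thesis using DQ(8)[OF th_in th_in ne] \<open>x\<in>A\<close> \<open>y\<in>A\<close> by blast
    qed
    thus ?thesis using r1 hrefl that by blast
  qed
  thus ?thesis unfolding pp_iso_def using th_bij by blast
qed

end

lemma less_level: assumes "plane_poset P" "plane_poset Q" "pp_less P Q"
  shows "pp_level P < pp_level Q"
proof -
  interpret le_setup P Q using assms by unfold_locales (auto simp: pp_less_def)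
  show ?thesis using level_mono level_eq_iso assms(3) unfolding pp_less_def by fastforce
qed


definition gap :: "nat set \<Rightarrow> (nat\<Rightarrow>nat\<Rightarrow>bool) \<Rightarrow> nat \<Rightarrow> nat \<Rightarrow> nat" where
  "gap A le x y = card {w\<in>A. w\<noteq>x \<and> w\<noteq>y \<and> le x w \<and> le w y}"

lemma gap_lt:
  assumes "finite A" "lin A le" "x\<in>A" "y\<in>A" "z\<in>A" "z\<noteq>x" "z\<noteq>y" "le x z" "le z y"
  shows "gap A le x z < gap A le x y" "gap A le z y < gap A le x y"
proof -
  note T = lin_trans[OF assms(2)] and AS = lin_antisym[OF assms(2)]
  have "{w\<in>A. w\<noteq>x \<and> w\<noteq>z \<and> le x w \<and> le w z} \<subset> {w\<in>A. w\<noteq>x \<and> w\<noteq>y \<and> le x w \<and> le w y}"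
  proof -
    have "{w\<in>A. w\<noteq>x \<and> w\<noteq>z \<and> le x w \<and> le w z} \<subseteq> {w\<in>A. w\<noteq>x \<and> w\<noteq>y \<and> le x w \<and> le w y}"
    proof
      fix w assume "w \<in> {w\<in>A. w\<noteq>x \<and> w\<noteq>z \<and> le x w \<and> le w z}"
      hence w: "w\<in>A" "w\<noteq>x" "w\<noteq>z" "le x w" "le w z" by auto
      have "le w y" using T[OF w(1) assms(5) assms(4) w(5) assms(9)] .
      moreover have "w \<noteq> y"
      proof assume "w = y" thus False using AS[OF assms(5) w(1)] w assms(9) by simp qed
      ultimately show "w \<in> {w\<in>A. w\<noteq>x \<and> w\<noteq>y \<and> le x w \<and> le w y}" using w by simp
    qed
    moreover have "z \<in> {w\<in>A. w\<noteq>x \<and> w\<noteq>y \<and> le x w \<and> le w y}" using assms by auto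
    ultimately show ?thesis by blast
  qed
  thus "gap A le x z < gap A le x y" unfolding gap_def by (rule psubset_card_mono[rotated]) (use assms in auto)
  have "{w\<in>A. w\<noteq>z \<and> w\<noteq>y \<and> le z w \<and> le w y} \<subset> {w\<in>A. w\<noteq>x \<and> w\<noteq>y \<and> le x w \<and> le w y}"
  proof -
    have "{w\<in>A. w\<noteq>z \<and> w\<noteq>y \<and> le z w \<and> le w y} \<subseteq> {w\<in>A. w\<noteq>x \<and> w\<noteq>y \<and> le x w \<and> le w y}"
    proof
      fix w assume "w \<in> {w\<in>A. w\<noteq>z \<and> w\<noteq>y \<and> le z w \<and> le w y}"
      hence w: "w\<in>A" "w\<noteq>z" "w\<noteq>y" "le z w" "le w y" by auto
      have "le x w" using T[OF assms(3) assms(5) w(1) assms(8) w(4)] .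
      moreover have "w \<noteq> x"
      proof assume "w = x" thus False using AS[OF assms(5) w(1)] w assms(8) by simp qed
      ultimately show "w \<in> {w\<in>A. w\<noteq>x \<and> w\<noteq>y \<and> le x w \<and> le w y}" using w by simp
    qed
    moreover have "z \<in> {w\<in>A. w\<noteq>x \<and> w\<noteq>y \<and> le x w \<and> le w y}" using assms by auto
    ultimately show ?thesis by blast
  qed
  thus "gap A le z y < gap A le x y" unfolding gap_def by (rule psubset_card_mono[rotated]) (use assms in auto)
qed

context le_setup begin

abbreviation "le' \<equiv> \<lambda>u v. h u v \<or> r v u"
definition "DD = {(x,y). x\<in>A \<and> y\<in>A \<and> x\<noteq>y \<and> h x y \<and> \<not> h2 (th x) (th y)}"

lemma DD_ne: assumes "pp_level P < pp_level Q" shows "DD \<noteq> {}"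
proof
  assume e: "DD = {}"
  have "LS Q \<subseteq> map_prod th th ` LS P"
  proof
    fix p assume "p \<in> LS Q"
    then obtain a b where p: "p = (a,b)" "a \<in> B" "b \<in> B" "r2 a b" "a \<noteq> b" by (auto simp: LS_def)
    then obtain u v where uv: "u \<in> A" "v \<in> A" "a = th u" "b = th v" using th_img by blast
    have ne: "u \<noteq> v" using uv p by auto
    have "\<not> h u v"
    proof
      assume "h u v" hence "h2 a b" using e uv ne unfolding DD_def by auto
      thus False using DQ(8)[OF p(2,3,5)] p by blast
    qed
    moreover have "\<not> h v u"
    proof
      assume "h v u" hence "h2 b a" using e uv ne unfolding DD_def by auto
      thus False using DQ(8)[OF p(2,3,5)] p by blast
    qed
    moreover have "\<not> r v u"
    proof
      assume "r v u" hence "r2 b a" using r_pres uv ne by auto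
      thus False using DQ(6)[OF p(2,3)] p by blast
    qed
    ultimately have "r u v" using DP(8)[OF uv(1,2) ne] by blast
    hence "(u,v) \<in> LS P" using uv ne by (auto simp: LS_def)
    thus "p \<in> map_prod th th ` LS P" using p uv by force
  qed
  hence "card (LS Q) \<le> card (map_prod th th ` LS P)"
    by (intro card_mono finite_imageI LS_finite[OF pP])
  also have "\<dots> \<le> card (LS P)" by (rule card_image_le[OF LS_finite[OF pP]])
  finally show False using assms unfolding level_LS by simp
qed

lemma cover:
  assumes "pp_level P < pp_level Q"
  shows "\<exists>R. plane_poset R \<and> pp_le P R \<and> pp_le R Q \<and> pp_level R = Suc (pp_level P)"
proof -
  obtain p0 where "p0 \<in> DD" using DD_ne[OF assms] by blast
  then obtain p where p: "p \<in> DD" and pm: "\<forall>q. q \<in> DD \<longrightarrow> (case p of (a,b) \<Rightarrow> gap A le' a b) \<le> (case q of (a,b) \<Rightarrow> gap A le' a b)"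
    using ex_has_least_nat[of "\<lambda>q. q \<in> DD" p0 "\<lambda>(a,b). gap A le' a b"] by blast
  obtain x y where xy: "p = (x,y)" by force
  have x: "x\<in>A" and y: "y\<in>A" and xyne: "x\<noteq>y" and hxy: "h x y" and nh2: "\<not> h2 (th x) (th y)"
    using p xy unfolding DD_def by auto
  have minD: "gap A le' x y \<le> gap A le' a b" if "(a,b) \<in> DD" for a b using pm that xy by fastforce
  have r2xy: "r2 (th x) (th y)" using th_mono[OF x y] hxy nh2 by (simp add: pp_tle_def)
  have finA: "finite A" using DP(1) .
  have linA: "lin A (pp_tle P)" using pp_lin[OF pP] .
  note TT = lin_trans[OF linA] and AA = lin_antisym[OF linA]
  have lin': "lin A le'" using lin_dual[OF pP] .
  have noz: "\<not>(h x z \<and> h z y) \<and> \<not>(r z x \<and> h z y) \<and> \<not>(h x z \<and> r y z)"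
    if z: "z\<in>A" "z\<noteq>x" "z\<noteq>y" for z
  proof (intro conjI notI)
    assume a: "h x z \<and> h z y"
    have g: "gap A le' x z < gap A le' x y" "gap A le' z y < gap A le' x y"
      using gap_lt[OF finA lin' x y z] a by auto
    have "h2 (th x) (th z) \<or> \<not> h2 (th x) (th z)" by simp
    moreover have "\<not> h2 (th x) (th z) \<Longrightarrow> False" using minD[of x z] g a z x unfolding DD_def by force
    moreover have "\<not> h2 (th z) (th y) \<Longrightarrow> False" using minD[of z y] g a z y unfolding DD_def by force
    ultimately show False using DQ(4)[OF th_in[OF x] th_in[OF z(1)] th_in[OF y]] nh2 by blast
  next
    assume a: "r z x \<and> h z y"
    have g: "gap A le' z y < gap A le' x y"
      using gap_lt[OF finA lin' x y z] a by auto
    have "h2 (th z) (th y)" using minD[of z y] g a z y unfolding DD_def by force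
    moreover have "r2 (th z) (th x)" using r_pres z x a by auto
    hence "r2 (th z) (th y)" using DQ(7)[OF th_in[OF z(1)] th_in[OF x] th_in[OF y]] r2xy by blast
    moreover have "th z \<noteq> th y" using th_inj z y by auto
    ultimately show False using DQ(8)[OF th_in[OF z(1)] th_in[OF y]] by blast
  next
    assume a: "h x z \<and> r y z"
    have g: "gap A le' x z < gap A le' x y"
      using gap_lt[OF finA lin' x y z] a by auto
    have "h2 (th x) (th z)" using minD[of x z] g a z x unfolding DD_def by force
    moreover have "r2 (th y) (th z)" using r_pres z y a by auto
    hence "r2 (th x) (th z)" using DQ(7)[OF th_in[OF x] th_in[OF y] th_in[OF z(1)]] r2xy by blast
    moreover have "th x \<noteq> th z" using th_inj z x by auto
    ultimately show False using DQ(8)[OF th_in[OF x] th_in[OF z(1)]] by blast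
  qed
  define h' where "h' u v = (h u v \<and> \<not>(u = x \<and> v = y))" for u v
  define r' where "r' u v = (r u v \<or> (u = x \<and> v = y))" for u v
  define R where "R = (A, h', r')"
  have R: "pp_carrier R = A" "pp_h R = h'" "pp_r R = r'" by (simp_all add: R_def pp_carrier_def pp_h_def pp_r_def)
  have nrxy: "\<not> r x y" "\<not> r y x" using DP(8)[OF x y xyne] hxy by auto
  have nhyx: "\<not> h y x" using DP(3)[OF x y] hxy xyne by auto
  have tleR: "pp_tle R = pp_tle P" using hxy by (auto simp: pp_tle_def R h'_def r'_def fun_eq_iff)
  have ppR: "plane_poset R"
    unfolding plane_poset_def partial_order_rel_def comparable_def R
  proof (intro conjI ballI impI allI)
    show "finite A" by (rule finA)
    fix a assume a: "a\<in>A" show "h' a a" "r' a a" using DP(2)[OF a] DP(5)[OF a] xyne by (auto simp: h'_def r'_def)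
  next
    fix a b assume ab: "a\<in>A" "b\<in>A" "h' a b \<and> h' b a"
    hence "h a b" "h b a" by (simp_all add: h'_def)
    thus "a = b" using DP(3)[OF ab(1,2)] by blast
  next
    fix a b assume ab: "a\<in>A" "b\<in>A" "r' a b \<and> r' b a" thus "a = b" using DP(6)[OF ab(1,2)] nrxy by (auto simp: r'_def)
  next
    fix a b c assume abc: "a\<in>A" "b\<in>A" "c\<in>A" "h' a b \<and> h' b c"
    hence "h a b" "h b c" by (simp_all add: h'_def)
    hence "h a c" using DP(4)[OF abc(1-3)] by blast
    moreover have "\<not>(a = x \<and> c = y)"
    proof
      assume e: "a = x \<and> c = y"
      have "b \<noteq> x" "b \<noteq> y" using abc e by (auto simp: h'_def)
      thus False using noz[OF abc(2)] abc e by (auto simp: h'_def)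
    qed
    ultimately show "h' a c" by (simp add: h'_def)
  next
    fix a b c assume abc: "a\<in>A" "b\<in>A" "c\<in>A" "r' a b \<and> r' b c"
    show "r' a c"
    proof (cases "(a = x \<and> b = y) \<or> (b = x \<and> c = y)")
      case False thus ?thesis using abc DP(7)[OF abc(1-3)] by (auto simp: r'_def)
    next
      case True
      thus ?thesis
      proof (elim disjE conjE)
        assume e: "a = x" "b = y"
        show ?thesis
        proof (cases "c = y")
          case True thus ?thesis using e by (simp add: r'_def)
        next
          case cne: False
          have ryc: "r y c" using abc e cne xyne by (auto simp: r'_def)
          have cx: "c \<noteq> x" using ryc nrxy by auto
          have "\<not> h x c" using noz[OF abc(3) cx cne] ryc by auto
          moreover have "\<not> h c x"
          proof
            assume "h c x"
            hence t1: "pp_tle P c x" by (simp add: pp_tle_def)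
            have "pp_tle P x y" "pp_tle P y c" using hxy ryc by (simp_all add: pp_tle_def)
            hence "pp_tle P x c" using TT[OF x y abc(3)] by blast
            thus False using AA[OF x abc(3) _ t1] cx by blast
          qed
          moreover have "\<not> r c x" using DP(7)[OF y abc(3) x] ryc nrxy by blast
          ultimately have "r x c" using DP(8)[OF x abc(3) cx[symmetric]] by blast
          thus ?thesis using e by (simp add: r'_def)
        qed
      next
        assume e: "b = x" "c = y"
        show ?thesis
        proof (cases "a = x")
          case True thus ?thesis using e by (simp add: r'_def)
        next
          case ane: False
          have rax: "r a x" using abc e ane by (auto simp: r'_def)
          have ay: "a \<noteq> y" using rax nrxy by auto
          have "\<not> h a y" using noz[OF abc(1) ane ay] rax by auto
          moreover have "\<not> h y a"
          proof
            assume "h y a"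
            hence t1: "pp_tle P y a" by (simp add: pp_tle_def)
            have "pp_tle P a x" "pp_tle P x y" using hxy rax by (simp_all add: pp_tle_def)
            hence "pp_tle P a y" using TT[OF abc(1) x y] by blast
            thus False using AA[OF y abc(1) t1] ay by blast
          qed
          moreover have "\<not> r y a" using DP(7)[OF y abc(1) x] rax nrxy by blast
          ultimately have "r a y" using DP(8)[OF abc(1) y ay] by blast
          thus ?thesis using e by (simp add: r'_def)
        qed
      qed
    qed
  next
    fix a b assume ab: "a\<in>A" "b\<in>A" "a \<noteq> b"
    show "(h' a b \<or> h' b a) = (\<not> (r' a b \<or> r' b a))"
    proof (cases "(a = x \<and> b = y) \<or> (a = y \<and> b = x)")
      case True thus ?thesis using nhyx xyne by (auto simp: h'_def r'_def)
    next
      case False thus ?thesis using DP(8)[OF ab] by (auto simp: h'_def r'_def)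
    qed
  qed
  have thR: "pp_theta P R = (\<lambda>u. if u \<in> A then u else undefined)"
    by (rule theta_eq[OF pP ppR]) (auto simp: thprop_def R tleR bij_betw_def inj_on_def intro!: image_eqI)
  have thRQ: "pp_theta R Q = th" unfolding pp_theta_def R tleR ..
  have le1: "pp_le P R" unfolding pp_le_def R thR by (auto simp: h'_def)
  have le2: "pp_le R Q" unfolding pp_le_def R thRQ using cardeq hrefl nh2 by (auto simp: h'_def)
  have "LS R = insert (x,y) (LS P)" using x y xyne by (auto simp: LS_def R r'_def)
  moreover have "(x,y) \<notin> LS P" using nrxy by (auto simp: LS_def)
  ultimately have "pp_level R = Suc (pp_level P)" unfolding level_LS using LS_finite[OF pP] by simp
  thus ?thesis using ppR le1 le2 by blast
qed

end


lemma edge_level: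
  assumes "plane_poset P" "plane_poset Q" "pp_hasse_edge P Q"
  shows "pp_level Q = Suc (pp_level P)"
proof (rule ccontr)
  assume ne: "pp_level Q \<noteq> Suc (pp_level P)"
  have less: "pp_less P Q" using assms(3) by (simp add: pp_hasse_edge_def)
  have lt: "pp_level P < pp_level Q" using less_level[OF assms(1,2) less] .
  interpret le_setup P Q using assms less by unfold_locales (auto simp: pp_less_def)
  obtain R where R: "plane_poset R" "pp_le P R" "pp_le R Q" "pp_level R = Suc (pp_level P)"
    using cover[OF lt] by blast
  have "pp_less P R" using R level_iso[of P R] by (auto simp: pp_less_def)
  moreover have "pp_less R Q" using R level_iso[of R Q] lt ne by (auto simp: pp_less_def)
  ultimately show False using assms(3) R(1) unfolding pp_hasse_edge_def by blast
qed

theorem proposition27: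
  assumes "plane_poset P" and "plane_poset Q" and "pp_le P Q"
    and "pp_hasse_path ps P Q"
  shows "int (length ps - 1) = int (pp_level Q) - int (pp_level P)"
proof -
  have ne: "ps \<noteq> []" and pl: "\<forall>R\<in>set ps. plane_poset R" and i1: "pp_iso (hd ps) P"
    and i2: "pp_iso (last ps) Q"
    and ed: "\<forall>i. Suc i < length ps \<longrightarrow> pp_hasse_edge (ps ! i) (ps ! Suc i)"
    using assms(4) unfolding pp_hasse_path_def by auto
  have st: "pp_level (ps ! i) = pp_level (ps ! 0) + i" if "i < length ps" for i
    using that
  proof (induction i)
    case 0 show ?case by simp
  next
    case (Suc i)
    have "pp_level (ps ! Suc i) = Suc (pp_level (ps ! i))"
      using edge_level[of "ps ! i" "ps ! Suc i"] pl ed Suc.prems by simp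
    thus ?case using Suc by simp
  qed
  have "pp_level (last ps) = pp_level (hd ps) + (length ps - 1)"
    using st[of "length ps - 1"] ne by (simp add: last_conv_nth hd_conv_nth)
  moreover have "pp_level (hd ps) = pp_level P" "pp_level (last ps) = pp_level Q"
    using level_iso i1 i2 by auto
  ultimately show ?thesis by simp
qed

end
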